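(* Let $n,m$ be integers with either $m=n-1\geq 0$ or $m=n-2\geq 0$, and let $H(s)=Q_{nm}(s)/P_{nm}(s)$ be the $(n,m)$ Padé approximant of $e^{-s}$. Then $H$ yields a maximally flat approximation of order $n$ of the ideal (unit-amplitude) lowpass characteristic: $$|H(j\omega)|^2=1+c\,\omega^{2n}+O(\omega^{2n+2})\quad(\omega\to0)$$ for some constant $c\neq0$.
   Context: The $(n,m)$ Padé approximant of $e^{-s}$ is $Q_{nm}(s)/P_{nm}(s)$ with $Q_{nm}(s)=\frac{n!}{(n+m)!}\sum_{k=0}^{m}\binom{m}{k}\frac{(n+k)!}{n!}(-s)^{m-k}$ and $P_{nm}(s)=\frac{m!}{(n+m)!}\sum_{k=0}^{n}\binom{n}{k}\frac{(m+k)!}{m!}s^{n-k}$ (equivalently, the unique rational function with $\deg Q\le m$, $\deg P\le n$, $P(0)=1$, $P(s)e^{-s}-Q(s)=O(s^{n+m+1})$). An amplitude approximation of unit amplitude is maximally flat of order $k$ if, apart from the constant term $1$, the Taylor expansion of $|H(j\omega)|^2$ about $\omega=0$ begins with the term in $\omega^{2k}$. *)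

theory Defs
  imports "HOL-Analysis.Analysis" "HOL-Library.Landau_Symbols"
begin

definition pade_Q :: "nat \<Rightarrow> nat \<Rightarrow> complex \<Rightarrow> complex" where
  "pade_Q n m s = (fact n / fact (n + m)) *
     (\<Sum>k\<le>m. of_nat (m choose k) * (fact (n + k) / fact n) * (- s) ^ (m - k))"

definition pade_P :: "nat \<Rightarrow> nat \<Rightarrow> complex \<Rightarrow> complex" where
  "pade_P n m s = (fact m / fact (n + m)) *
     (\<Sum>k\<le>n. of_nat (n choose k) * (fact (m + k) / fact m) * s ^ (n - k))"

definition pade_H :: "nat \<Rightarrow> nat \<Rightarrow> complex \<Rightarrow> complex" where
  "pade_H n m s = pade_Q n m s / pade_P n m s"

definition maximally_flat_of_order :: "(complex \<Rightarrow> complex) \<Rightarrow> nat \<Rightarrow> bool" where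
  "maximally_flat_of_order H k \<longleftrightarrow>
     (\<exists>c::real. c \<noteq> 0 \<and>
        (\<lambda>\<omega>::real. (cmod (H (\<i> * complex_of_real \<omega>)))\<^sup>2 - 1 - c * \<omega> ^ (2 * k))
          \<in> O[at 0](\<lambda>\<omega>. \<omega> ^ (2 * k + 2)))"

end

theory Submission
  imports Defs "HOL-Computational_Algebra.Formal_Power_Series"
begin


definition G :: "real \<Rightarrow> nat \<Rightarrow> real fps" where
  "G x m = Abs_fps (\<lambda>i. pochhammer (x - of_nat i) m / fact i)"

lemma poch_diff: "pochhammer (x - 1) (Suc k) - pochhammer x (Suc k) = - (of_nat (Suc k)) * pochhammer (x::real) k"
  proof -
  have "pochhammer (x - 1) (Suc k) = (x - 1) * pochhammer x k" by (simp add: pochhammer_rec)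
  moreover have "pochhammer x (Suc k) = pochhammer x k * (x + of_nat k)" by (simp only: pochhammer_Suc)
  ultimately show ?thesis by (simp add: algebra_simps)
qed

lemma G_deriv: "fps_deriv (G x m) = G (x - 1) m"
  proof (rule fps_ext)
  fix n
  have "fact (Suc n) = (real (Suc n)) * fact n" by simp
  moreover have "x - real (Suc n) = x - 1 - real n" by simp
  ultimately show "fps_nth (fps_deriv (G x m)) n = fps_nth (G (x - 1) m) n"
    by (simp add: G_def del: of_nat_Suc fact_Suc) (simp add: algebra_simps)
qed

lemma EG: "fps_nth (fps_exp (-1) * G x m) j = (-1)^j * of_nat (m choose j) * pochhammer x (m - j)"
proof (induction j arbitrary: x)
  case 0
  then show ?case by (simp add: G_def fps_mult_nth)
next
  case (Suc j)
  have d: "fps_deriv (fps_exp (-1) * G x m) = fps_exp (-1) * G (x - 1) m - fps_exp (-1) * G x m"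
    proof -
  have e: "fps_deriv (fps_exp (-1::real)) = - fps_exp (-1)"
    by (simp add: fps_eq_iff)
  show ?thesis unfolding fps_deriv_mult e G_deriv by (simp add: algebra_simps)
qed
  have "of_nat (Suc j) * fps_nth (fps_exp (-1) * G x m) (Suc j) = fps_nth (fps_deriv (fps_exp (-1) * G x m)) j"
    by (subst fps_deriv_nth) simp
  also have "\<dots> = (-1)^j * of_nat (m choose j) * (pochhammer (x-1) (m - j) - pochhammer x (m - j))"
    unfolding d fps_sub_nth Suc.IH by (simp add: algebra_simps)
  also have "\<dots> = of_nat (Suc j) * ((-1)^Suc j * of_nat (m choose Suc j) * pochhammer x (m - Suc j))"
  proof (cases "j < m")
    case True
    then obtain k where k: "m - j = Suc k" "m - Suc j = k" by (metis Suc_diff_Suc)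
    have b: "real (Suc j) * real (m choose Suc j) = real (Suc k) * real (m choose j)"
    proof -
      have "Suc j * (m choose Suc j) = (m - j) * (m choose j)"
        by (metis binomial_absorption binomial_absorb_comp)
      then show ?thesis using k by (metis of_nat_mult)
    qed
    have "(-1)^j * real (m choose j) * (pochhammer (x-1) (m-j) - pochhammer x (m-j))
        = - ((-1)^j * (real (Suc k) * real (m choose j)) * pochhammer x k)"
      unfolding k poch_diff by (simp add: algebra_simps)
    also have "\<dots> = - ((-1)^j * (real (Suc j) * real (m choose Suc j)) * pochhammer x k)"
      by (simp only: b)
    also have "\<dots> = real (Suc j) * ((-1)^Suc j * real (m choose Suc j) * pochhammer x (m - Suc j))"
      unfolding k by (simp add: algebra_simps)
    finally show ?thesis .
  next
    case False
    then show ?thesis by simp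
  qed
  finally have eq: "real (Suc j) * fps_nth (fps_exp (-1) * G x m) (Suc j) =
     real (Suc j) * ((-1)^Suc j * of_nat (m choose Suc j) * pochhammer x (m - Suc j))" .
  show ?case
    by (rule mult_left_cancel[THEN iffD1, OF _ eq]) simp
qed


definition pc :: "nat \<Rightarrow> nat \<Rightarrow> nat \<Rightarrow> real" where
  "pc n m i = real (n choose i) * fact (n + m - i) / fact (n + m)"
definition qc :: "nat \<Rightarrow> nat \<Rightarrow> nat \<Rightarrow> real" where
  "qc n m i = (-1)^i * real (m choose i) * fact (n + m - i) / fact (n + m)"
definition rfl :: "(nat \<Rightarrow> real) \<Rightarrow> real fps" where
  "rfl f = Abs_fps (\<lambda>i. (-1)^i * f i)"

lemma poch_fact: "pochhammer (real k + 1) m = fact (k + m) / fact k"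
proof (induction m)
  case 0 then show ?case by simp
next
  case (Suc m)
  have "pochhammer (real k + 1) (Suc m) = pochhammer (real k + 1) m * (real k + 1 + real m)"
    by (simp only: pochhammer_Suc)
  also have "\<dots> = fact (k + m) / fact k * real (Suc (k + m))" using Suc by simp
  also have "\<dots> = fact (k + Suc m) / fact k" by simp
  finally show ?case .
qed

lemma pc_G:
  assumes "i \<le> n + m"
  shows "pc n m i = (fact n / fact (n + m)) * fps_nth (G (real n + 1) m) i"
proof (cases "i \<le> n")
  case True
  have e: "real n + 1 - real i = real (n - i) + 1" using True by simp
  have "pochhammer (real n + 1 - real i) m = fact (n - i + m) / fact (n - i)"
    unfolding e by (rule poch_fact)
  moreover have "real (n choose i) = fact n / (fact i * fact (n - i))"
    using True by (rule binomial_fact)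
  moreover have "n - i + m = n + m - i" using True by simp
  ultimately show ?thesis by (simp add: pc_def G_def)
next
  case False
  have "pochhammer (real n + 1 - real i) m = 0"
    unfolding pochhammer_eq_0_iff
    by (rule exI[of _ "i - n - 1"]) (use False assms in auto)
  then show ?thesis using False by (simp add: pc_def G_def)
qed

lemma pade_core:
  assumes "j \<le> n + m"
  shows "fps_nth (fps_exp (-1) * Abs_fps (pc n m)) j = qc n m j"
proof -
  have "fps_nth (fps_exp (-1) * Abs_fps (pc n m)) j
      = (\<Sum>i=0..j. fps_nth (fps_exp (-1)) i * ((fact n / fact (n + m)) * fps_nth (G (real n + 1) m) (j - i)))"
    unfolding fps_mult_nth using assms by (intro sum.cong) (auto simp: pc_G)
  also have "\<dots> = (fact n / fact (n + m)) * fps_nth (fps_exp (-1) * G (real n + 1) m) j"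
    unfolding fps_mult_nth sum_distrib_left by (intro sum.cong) (auto simp: field_simps)
  also have "\<dots> = (fact n / fact (n + m)) * ((-1)^j * of_nat (m choose j) * pochhammer (real n + 1) (m - j))"
    by (simp only: EG)
  also have "\<dots> = qc n m j"
  proof (cases "j \<le> m")
    case True
    have "pochhammer (real n + 1) (m - j) = fact (n + (m - j)) / fact n" by (rule poch_fact)
    moreover have "n + (m - j) = n + m - j" using True by simp
    ultimately show ?thesis by (simp add: qc_def)
  next
    case False then show ?thesis by (simp add: qc_def)
  qed
  finally show ?thesis .
qed

lemma neg1_diff: "i \<le> j \<Longrightarrow> (-1::real)^(j - i) = (-1)^j * (-1)^i"
proof -
  assume "i \<le> j"
  then obtain d where j: "j = i + d" using le_Suc_ex by blast
  have "(-1::real)^i * (-1)^i = 1" by (simp flip: power_add)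
  then show ?thesis unfolding j by (simp add: power_add algebra_simps)
qed

lemma refl_exp: "fps_nth (fps_exp 1 * rfl f) j = (-1)^j * fps_nth (fps_exp (-1) * Abs_fps f) j"
  unfolding fps_mult_nth rfl_def sum_distrib_left
  by (intro sum.cong) (auto simp: neg1_diff power_minus')

lemma low_mult:
  assumes "\<And>i. i \<le> N \<Longrightarrow> fps_nth A i = fps_nth A' i"
      and "\<And>i. i \<le> N \<Longrightarrow> fps_nth B i = fps_nth B' i" and "k \<le> N"
  shows "fps_nth (A * B) k = fps_nth (A' * B') k"
  unfolding fps_mult_nth using assms by (intro sum.cong) auto

lemma prod_low:
  assumes "k \<le> n + m"
  shows "fps_nth (Abs_fps (pc n m) * rfl (pc n m)) k = fps_nth (Abs_fps (qc n m) * rfl (qc n m)) k"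
proof -
  have one: "fps_exp (-1::real) * fps_exp 1 = 1" by (simp flip: fps_exp_add_mult)
  have "Abs_fps (pc n m) * rfl (pc n m) = (fps_exp (-1) * Abs_fps (pc n m)) * (fps_exp 1 * rfl (pc n m))"
    by (metis (no_types, lifting) one mult.assoc mult.left_commute mult_1)
  also have "fps_nth \<dots> k = fps_nth (Abs_fps (qc n m) * rfl (qc n m)) k"
  proof (rule low_mult[where N="n+m"])
    show "fps_nth (fps_exp (-1) * Abs_fps (pc n m)) i = fps_nth (Abs_fps (qc n m)) i" if "i \<le> n + m" for i
      using pade_core[OF that] by simp
    show "fps_nth (fps_exp 1 * rfl (pc n m)) i = fps_nth (rfl (qc n m)) i" if "i \<le> n + m" for i
      by (simp only: refl_exp pade_core[OF that]) (simp add: rfl_def)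
  qed (rule assms)
  finally show ?thesis .
qed

lemma odd_zero:
  assumes "odd k"
  shows "fps_nth (Abs_fps f * rfl f) k = 0"
proof -
  let ?S = "fps_nth (Abs_fps f * rfl f) k"
  have "?S = (\<Sum>i=0..k. f i * ((-1)^(k-i) * f (k - i)))" by (simp add: fps_mult_nth rfl_def)
  also have "\<dots> = (\<Sum>i=0..k. f (k - i) * ((-1)^(k - (k - i)) * f (k - (k - i))))"
    by (subst sum.atLeastAtMost_rev) simp
  also have "\<dots> = (\<Sum>i=0..k. - (f i * ((-1)^(k-i) * f (k - i))))"
  proof (intro sum.cong refl)
    fix i assume "i \<in> {0..k}"
    then have "i \<le> k" by simp
    then have "k - (k - i) = i" by simp
    moreover have "(-1::real)^i = - ((-1)^(k-i))"
      using neg1_diff[OF \<open>i \<le> k\<close>] assms by (simp add: neg1_diff)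
    ultimately show "f (k - i) * ((-1)^(k - (k - i)) * f (k - (k - i))) = - (f i * ((-1)^(k-i) * f (k - i)))"
      by simp
  qed
  also have "\<dots> = - ?S" by (simp add: fps_mult_nth rfl_def sum_negf)
  finally show ?thesis by simp
qed


lemma P_eval: "pade_P n m s = (\<Sum>i\<le>n. complex_of_real (pc n m i) * s^i)"
proof -
  have "(\<Sum>i\<le>n. complex_of_real (pc n m i) * s^i) = (\<Sum>k=0..n. complex_of_real (pc n m (n - k)) * s^(n - k))"
    by (subst sum.atLeastAtMost_rev) (simp add: atLeast0AtMost)
  also have "\<dots> = (\<Sum>k\<le>n. (fact m / fact (n + m)) * (of_nat (n choose k) * (fact (m + k) / fact m) * s ^ (n - k)))"
  proof (unfold atLeast0AtMost, intro sum.cong refl)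
    fix k assume "k \<in> {..n}"
    then have k: "k \<le> n" by simp
    have "n choose (n - k) = n choose k" using k by (simp add: binomial_symmetric[symmetric])
    moreover have "n + m - (n - k) = m + k" using k by simp
    ultimately have h1: "pc n m (n - k) = real (n choose k) * fact (m + k) / fact (n + m)"
      unfolding pc_def by simp
    have h2: "complex_of_real (pc n m (n - k)) = of_nat (n choose k) * fact (m + k) / fact (n + m)"
      unfolding h1 by simp
    have h3: "(fact m / fact (n + m)) * (of_nat (n choose k) * (fact (m + k) / fact m)) = of_nat (n choose k) * fact (m + k) / (fact (n + m) :: complex)"
      by (simp add: divide_simps)
    show "complex_of_real (pc n m (n - k)) * s^(n - k) = (fact m / fact (n + m)) * (of_nat (n choose k) * (fact (m + k) / fact m) * s ^ (n - k))"
      using h2 h3 by (metis mult.assoc)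
  qed
  also have "\<dots> = pade_P n m s" by (simp add: pade_P_def sum_distrib_left)
  finally show ?thesis by simp
qed

lemma Q_eval:
  assumes "m \<le> n"
  shows "pade_Q n m s = (\<Sum>i\<le>n. complex_of_real (qc n m i) * s^i)"
proof -
  have "(\<Sum>i\<le>n. complex_of_real (qc n m i) * s^i) = (\<Sum>i\<le>m. complex_of_real (qc n m i) * s^i)"
    using assms by (intro sum.mono_neutral_right) (auto simp: qc_def)
  also have "\<dots> = (\<Sum>k=0..m. complex_of_real (qc n m (m - k)) * s^(m - k))"
    by (subst sum.atLeastAtMost_rev) (simp add: atLeast0AtMost)
  also have "\<dots> = (\<Sum>k\<le>m. (fact n / fact (n + m)) * (of_nat (m choose k) * (fact (n + k) / fact n) * (- s) ^ (m - k)))"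
  proof (unfold atLeast0AtMost, intro sum.cong refl)
    fix k assume "k \<in> {..m}"
    then have k: "k \<le> m" by simp
    have "m choose (m - k) = m choose k" using k by (simp add: binomial_symmetric[symmetric])
    moreover have "n + m - (m - k) = n + k" using k by simp
    ultimately have h0: "qc n m (m - k) = (-1)^(m-k) * real (m choose k) * fact (n + k) / fact (n + m)"
      unfolding qc_def by simp
    have h1: "complex_of_real (qc n m (m - k)) * s^(m - k) = of_nat (m choose k) * fact (n + k) / fact (n + m) * (- s) ^ (m - k)"
      unfolding h0 power_minus[of s] by simp
    have h3: "(fact n / fact (n + m)) * (of_nat (m choose k) * (fact (n + k) / fact n)) = of_nat (m choose k) * fact (n + k) / (fact (n + m) :: complex)"
      by (simp add: divide_simps)
    show "complex_of_real (qc n m (m - k)) * s^(m - k) = (fact n / fact (n + m)) * (of_nat (m choose k) * (fact (n + k) / fact n) * (- s) ^ (m - k))"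
      using h1 h3 by (metis mult.assoc)
  qed
  also have "\<dots> = pade_Q n m s" by (simp add: pade_Q_def sum_distrib_left)
  finally show ?thesis by simp
qed

lemma prod_eval:
  assumes "\<And>i. i > n \<Longrightarrow> f i = 0"
  shows "(\<Sum>i\<le>n. complex_of_real (f i) * s^i) * (\<Sum>i\<le>n. complex_of_real (f i) * (-s)^i)
       = (\<Sum>r\<le>n + n. complex_of_real (fps_nth (Abs_fps f * rfl f) r) * s^r)"
proof -
  have "(\<Sum>i\<le>n. complex_of_real (f i) * (-s)^i) = (\<Sum>i\<le>n. complex_of_real ((-1)^i * f i) * s^i)"
    unfolding power_minus[of s] by (simp add: mult_ac)
  then have "(\<Sum>i\<le>n. complex_of_real (f i) * s^i) * (\<Sum>i\<le>n. complex_of_real (f i) * (-s)^i)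
    = (\<Sum>r\<le>n + n. (\<Sum>k\<le>r. complex_of_real (f k) * complex_of_real ((-1)^(r-k) * f (r - k))) * s^r)"
    by (simp only:) (rule polynomial_product, auto simp: assms)
  also have "\<dots> = (\<Sum>r\<le>n + n. complex_of_real (fps_nth (Abs_fps f * rfl f) r) * s^r)"
    by (intro sum.cong refl) (simp add: fps_mult_nth rfl_def atLeast0AtMost)
  finally show ?thesis .
qed


abbreviation "cP n m r \<equiv> fps_nth (Abs_fps (pc n m) * rfl (pc n m)) r"
abbreviation "cQ n m r \<equiv> fps_nth (Abs_fps (qc n m) * rfl (qc n m)) r"

lemma pc_zero: "i > n \<Longrightarrow> pc n m i = 0" by (simp add: pc_def)
lemma qc_zero: "i > m \<Longrightarrow> qc n m i = 0" by (simp add: qc_def)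

lemma cP_top: "cP n m (2*n) = (-1)^n * (pc n m n)^2"
proof -
  have "cP n m (2*n) = (\<Sum>i\<in>{0..2*n}. pc n m i * ((-1)^(2*n-i) * pc n m (2*n-i)))"
    by (simp add: fps_mult_nth rfl_def)
  also have "\<dots> = pc n m n * ((-1)^(2*n-n) * pc n m (2*n-n))"
  proof (rule sum.remove[THEN trans])
    show "finite {0..2*n}" by simp
    show "n \<in> {0..2*n}" by simp
    have "(\<Sum>i\<in>{0..2*n} - {n}. pc n m i * ((-1)^(2*n-i) * pc n m (2*n-i))) = 0"
    proof (rule sum.neutral, rule ballI)
      fix i assume "i \<in> {0..2*n} - {n}"
      then have "i > n \<or> 2*n - i > n" by auto
      then show "pc n m i * ((-1)^(2*n-i) * pc n m (2*n-i)) = 0"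
        using pc_zero by auto
    qed
    then show "pc n m n * ((-1)^(2*n-n) * pc n m (2*n-n)) + (\<Sum>i\<in>{0..2*n} - {n}. pc n m i * ((-1)^(2*n-i) * pc n m (2*n-i))) = pc n m n * ((-1)^(2*n-n) * pc n m (2*n-n))"
      by simp
  qed
  also have "\<dots> = (-1)^n * (pc n m n)^2" by (simp add: power2_eq_square mult_2)
  finally show ?thesis .
qed

lemma cQ_top: assumes "m < n" shows "cQ n m (2*n) = 0"
proof -
  have "cQ n m (2*n) = (\<Sum>i\<in>{0..2*n}. qc n m i * ((-1)^(2*n-i) * qc n m (2*n-i)))"
    by (simp add: fps_mult_nth rfl_def)
  also have "\<dots> = 0"
  proof (rule sum.neutral, rule ballI)
    fix i assume "i \<in> {0..2*n}"
    then have "i > m \<or> 2*n - i > m" using assms by auto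
    then show "qc n m i * ((-1)^(2*n-i) * qc n m (2*n-i)) = 0"
      using qc_zero by auto
  qed
  finally show ?thesis .
qed

lemma D_ident:
  assumes h: "(n \<ge> 1 \<and> m = n - 1) \<or> (n \<ge> 2 \<and> m = n - 2)"
  shows "pade_P n m s * pade_P n m (-s) - pade_Q n m s * pade_Q n m (-s)
       = complex_of_real ((-1)^n * (pc n m n)^2) * s^(2*n)"
proof -
  have mn: "m < n" "2 * n \<le> n + m + 2" using h by auto
  have "pade_P n m s * pade_P n m (-s) = (\<Sum>r\<le>n + n. complex_of_real (cP n m r) * s^r)"
    unfolding P_eval by (rule prod_eval) (simp add: pc_zero)
  moreover have "pade_Q n m s * pade_Q n m (-s) = (\<Sum>r\<le>n + n. complex_of_real (cQ n m r) * s^r)"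
    unfolding Q_eval[OF less_imp_le[OF mn(1)]] by (rule prod_eval) (use mn in \<open>simp add: qc_zero\<close>)
  ultimately have "pade_P n m s * pade_P n m (-s) - pade_Q n m s * pade_Q n m (-s)
      = (\<Sum>r\<le>n + n. complex_of_real (cP n m r - cQ n m r) * s^r)"
    by (simp add: sum_subtractf algebra_simps)
  also have "\<dots> = complex_of_real (cP n m (2*n) - cQ n m (2*n)) * s^(2*n)"
  proof (rule sum.remove[THEN trans])
    show "finite {..n+n}" by simp
    show "2*n \<in> {..n+n}" by simp
    have "(\<Sum>r\<in>{..n+n} - {2*n}. complex_of_real (cP n m r - cQ n m r) * s^r) = 0"
    proof (rule sum.neutral, rule ballI)
      fix r assume "r \<in> {..n+n} - {2*n}"
      then have r: "r < 2*n" by auto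
      have "cP n m r = cQ n m r"
      proof (cases "r \<le> n + m")
        case True then show ?thesis by (rule prod_low)
      next
        case False
        then have "r = 2*n - 1" using r mn by auto
        then have "odd r" using r by auto
        then show ?thesis by (simp add: odd_zero)
      qed
      then show "complex_of_real (cP n m r - cQ n m r) * s^r = 0" by simp
    qed
    then show "complex_of_real (cP n m (2*n) - cQ n m (2*n)) * s^(2*n) + (\<Sum>r\<in>{..n+n} - {2*n}. complex_of_real (cP n m r - cQ n m r) * s^r) = complex_of_real (cP n m (2*n) - cQ n m (2*n)) * s^(2*n)"
      by simp
  qed
  also have "\<dots> = complex_of_real ((-1)^n * (pc n m n)^2) * s^(2*n)"
    by (simp add: cP_top cQ_top[OF mn(1)])
  finally show ?thesis .
qed


lemma cnj_P: "cnj (pade_P n m z) = pade_P n m (cnj z)"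
  unfolding P_eval by simp
lemma cnj_Q: "m \<le> n \<Longrightarrow> cnj (pade_Q n m z) = pade_Q n m (cnj z)"
  unfolding Q_eval by simp

lemma pow_ii: "(\<i> * complex_of_real w) ^ (2*n) = complex_of_real ((-1)^n * w^(2*n))"
proof -
  have "(\<i> * complex_of_real w) ^ (2*n) = ((\<i> * complex_of_real w)^2)^n" by (simp add: power_mult)
  also have "(\<i> * complex_of_real w)^2 = complex_of_real (- (w^2))" by (simp add: power_mult_distrib)
  also have "(complex_of_real (- (w^2)))^n = complex_of_real ((-1)^n * w^(2*n))"
  proof -
    have "(complex_of_real (- (w^2)))^n = complex_of_real ((- (w^2))^n)" by (rule of_real_power[symmetric])
    also have "(- (w^2))^n = (-1)^n * w^(2*n)" by (simp only: power_minus[of "w^2"] power_mult)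
    finally show ?thesis .
  qed
  finally show ?thesis .
qed

lemma pc_0: "pc n m 0 = 1" by (simp add: pc_def)

theorem theorem5:
  fixes n m :: nat
  assumes "(n \<ge> 1 \<and> m = n - 1) \<or> (n \<ge> 2 \<and> m = n - 2)"
  shows "maximally_flat_of_order (pade_H n m) n"
proof -
  have mn: "m \<le> n" "n \<ge> 1" using assms by auto
  define x where "x = (\<lambda>w::real. \<i> * complex_of_real w)"
  define a where "a = (\<lambda>w. (cmod (pade_P n m (x w)))^2)"
  define b where "b = (\<lambda>w. (cmod (pade_Q n m (x w)))^2)"
  define p where "p = pc n m n"
  define S where "S = (\<lambda>w. (\<Sum>i\<le>2*n-2. complex_of_real (cP n m (Suc (Suc i))) * (x w)^i))"
  define K where "K = (\<lambda>w. - (p^2) * Re (S w) / a w)"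
  have cx: "cnj (x w) = - x w" for w by (simp add: x_def)
  have a_c: "complex_of_real (a w) = pade_P n m (x w) * pade_P n m (- x w)" for w
    unfolding a_def complex_norm_square cnj_P cx ..
  have b_c: "complex_of_real (b w) = pade_Q n m (x w) * pade_Q n m (- x w)" for w
    unfolding b_def complex_norm_square cnj_Q[OF mn(1)] cx ..
  have ab: "a w - b w = p^2 * w^(2*n)" for w
  proof -
    have "complex_of_real (a w - b w) = complex_of_real ((-1)^n * p^2) * (x w)^(2*n)"
      unfolding of_real_diff a_c b_c p_def by (rule D_ident[OF assms])
    also have "\<dots> = complex_of_real (p^2 * w^(2*n))"
      unfolding x_def pow_ii by (simp flip: of_real_mult add: algebra_simps flip: power_add)
    finally show ?thesis by (simp only: of_real_eq_iff)
  qed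
  have a_S: "a w = 1 - w^2 * Re (S w)" for w
  proof -
    obtain k where k: "n + n = Suc (Suc k)" "k = 2*n-2" using mn(2) by (intro that[of "2*n-2"]) auto
    have "complex_of_real (a w) = (\<Sum>r\<le>n + n. complex_of_real (cP n m r) * (x w)^r)"
      unfolding a_c P_eval by (rule prod_eval) (simp add: pc_zero)
    also have "\<dots> = complex_of_real (cP n m 0) + (complex_of_real (cP n m 1) * x w + (\<Sum>i\<le>k. complex_of_real (cP n m (Suc (Suc i))) * (x w)^(Suc (Suc i))))"
      unfolding k(1) sum.atMost_Suc_shift by simp
    also have "cP n m 0 = 1" by (simp add: fps_mult_nth rfl_def pc_0)
    also have "cP n m 1 = 0" by (rule odd_zero) simp
    also have "(\<Sum>i\<le>k. complex_of_real (cP n m (Suc (Suc i))) * (x w)^(Suc (Suc i))) = (x w)^2 * S w"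
      unfolding S_def k(2)[symmetric] sum_distrib_left by (intro sum.cong refl) (simp add: algebra_simps power2_eq_square)
    also have "(x w)^2 = - complex_of_real (w^2)" by (simp add: x_def power_mult_distrib)
    finally have "complex_of_real (a w) = 1 - complex_of_real (w^2) * S w" by simp
    then have "Re (complex_of_real (a w)) = Re (1 - complex_of_real (w^2) * S w)" by simp
    then show ?thesis by simp
  qed
  have p_pos: "p > 0" by (simp add: p_def pc_def)
  have a_cont: "isCont a 0"
    unfolding a_def x_def P_eval by (intro continuous_intros)
  have K_cont: "isCont K 0"
  proof -
    have "a 0 = 1" using a_S[of 0] by simp
    moreover have "isCont (\<lambda>w. Re (S w)) 0" unfolding S_def x_def by (intro isCont_Re continuous_intros)
    ultimately show ?thesis unfolding K_def using a_cont by (intro continuous_intros) auto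
  qed
  have a_ev: "eventually (\<lambda>w. a w \<noteq> 0) (at (0::real))"
  proof -
    have "(a \<longlongrightarrow> a 0) (at 0)" using a_cont by (simp add: isCont_def)
    moreover have "a 0 = 1" using a_S[of 0] by simp
    ultimately show ?thesis using tendsto_imp_eventually_ne by fastforce
  qed
  have w_ev: "eventually (\<lambda>w::real. w \<noteq> 0) (at 0)" by (simp add: eventually_at_filter)
  let ?err = "\<lambda>w::real. (cmod (pade_H n m (\<i> * complex_of_real w)))\<^sup>2 - 1 - (- (p^2)) * w ^ (2 * n)"
  have eq: "eventually (\<lambda>w. K w = ?err w / w^(2*n+2)) (at 0)"
    using a_ev w_ev
  proof eventually_elim
    case (elim w)
    have H: "(cmod (pade_H n m (\<i> * complex_of_real w)))\<^sup>2 = b w / a w"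
      by (simp add: pade_H_def a_def b_def x_def norm_divide power_divide)
    have bw: "b w = a w - p^2 * w^(2*n)" using ab[of w] by simp
    have "?err w = p^2 * w^(2*n) * (a w - 1) / a w"
      unfolding H bw using elim by (simp add: field_simps)
    also have "\<dots> = - (p^2) * w^(2*n+2) * Re (S w) / a w"
      unfolding a_S by (simp add: algebra_simps power_add power2_eq_square)
    finally show ?case using elim by (simp add: K_def field_simps)
  qed
  have "?err \<in> O[at 0](\<lambda>w. w ^ (2 * n + 2))"
  proof (rule bigoI_tendsto)
    show "((\<lambda>w. ?err w / w^(2*n+2)) \<longlongrightarrow> K 0) (at 0)"
      by (rule Lim_transform_eventually[OF _ eq]) (use K_cont in \<open>simp add: isCont_def\<close>)
    show "eventually (\<lambda>w::real. w^(2*n+2) \<noteq> 0) (at 0)"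
      using w_ev by eventually_elim simp
  qed
  moreover have "- (p^2) \<noteq> 0" using p_pos by simp
  ultimately show ?thesis unfolding maximally_flat_of_order_def by blast
qed
end
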